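(* Let $G$ be a graph on $[n]$ that is upper crossing closed with respect to a total order $\unlhd$ on $E(G)$, and order the atoms of $NC_G$ (the single-edge bonds, identified with the edges of $G$) by $\unlhd$. Then for every $k\ge 0$, the set of $k$-element non-bounded-below (NBB) sets of atoms of $NC_G$ equals the set of noncrossing NBC sets of $G$ with $k$ edges.
   Context: All graphs are finite simple graphs with vertex set $[n]=\{1,\dots,n\}$; edges are written $ij$ with $i<j$. Two edges $a_1a_2$ and $b_1b_2$ cross if $a_1<b_1<a_2<b_2$ or $b_1<a_1<b_2<a_2$. A spanning subgraph is identified with its edge set. A bond of $G$ is a spanning subgraph each of whose connected components is an induced subgraph of $G$; it is noncrossing if there are no two distinct components with vertex sets $B,B'$ and $a,c\in B$, $b,d\in B'$, $a<b<c<d$. $NC_G$ is the poset of noncrossing bonds ordered by inclusion of edge sets. Two crossing edges $e,f$ are crossing closed if among all induced connected subgraphs of $G$ containing $e$ and $f$ there is a unique minimal one under containment, denoted $J(e,f)$; $G$ is crossing closed if all pairs of crossing edges are (then $NC_G$ is a lattice). $G$ is upper crossing closed with respect to $\unlhd$ if it is crossing closed and for all crossing edges $e,f$, $J(e,f)$ contains an edge $h$ with $h\lhd e$ and $h\lhd f$. In a lattice $L$ with a partial order $\unlhd$ on its atoms, a set $S$ of atoms is bounded below if there is an atom $a$ with $a\lhd s$ for all $s\in S$ and $a<\bigvee S$; a set of atoms is NBB if it contains no bounded-below subset. Given $\unlhd$, a broken circuit is the edge set of a cycle of $G$ with its smallest edge removed; an NBC set is a set of edges containing no broken circuit; a noncrossing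 NBC set is an NBC set no two of whose edges cross. *)

theory Defs
  imports Main
begin

(* Graphs on [n] = {1..n}: an edge ij with i<j is the pair (i,j). *)

type_synonym edge = "nat \<times> nat"

definition graph_on :: "nat \<Rightarrow> edge set \<Rightarrow> bool" where
  "graph_on n E \<longleftrightarrow> E \<subseteq> {(i,j). 1 \<le> i \<and> i < j \<and> j \<le> n}"

definition crosses :: "edge \<Rightarrow> edge \<Rightarrow> bool" where
  "crosses e f \<longleftrightarrow>
     (fst e < fst f \<and> fst f < snd e \<and> snd e < snd f) \<or>
     (fst f < fst e \<and> fst e < snd f \<and> snd f < snd e)"

definition conn :: "edge set \<Rightarrow> (nat \<times> nat) set" where
  "conn S = (S \<union> S\<inverse>)\<^sup>*"

definition components :: "nat \<Rightarrow> edge set \<Rightarrow> nat set set" where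
  "components n S = (\<lambda>v. {w \<in> {1..n}. (v, w) \<in> conn S}) ` {1..n}"

definition edges_within :: "edge set \<Rightarrow> nat set \<Rightarrow> edge set" where
  "edges_within S B = {e \<in> S. fst e \<in> B \<and> snd e \<in> B}"

definition is_bond :: "nat \<Rightarrow> edge set \<Rightarrow> edge set \<Rightarrow> bool" where
  "is_bond n E S \<longleftrightarrow> S \<subseteq> E \<and>
     (\<forall>B \<in> components n S. edges_within S B = edges_within E B)"

definition noncrossing_partition :: "nat set set \<Rightarrow> bool" where
  "noncrossing_partition P \<longleftrightarrow>
     (\<forall>B \<in> P. \<forall>B' \<in> P. B \<noteq> B' \<longrightarrow>
        \<not> (\<exists>a b c d. a \<in> B \<and> c \<in> B \<and> b \<in> B' \<and> d \<in> B' \<and> a < b \<and> b < c \<and> c < d))"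

(* the carrier of the poset NC_G (ordered by inclusion) *)
definition NC :: "nat \<Rightarrow> edge set \<Rightarrow> edge set set" where
  "NC n E = {S. is_bond n E S \<and> noncrossing_partition (components n S)}"

definition is_join :: "'a set set \<Rightarrow> 'a set set \<Rightarrow> 'a set \<Rightarrow> bool" where
  "is_join P X j \<longleftrightarrow> j \<in> P \<and> (\<forall>x \<in> X. x \<subseteq> j) \<and>
     (\<forall>u \<in> P. (\<forall>x \<in> X. x \<subseteq> u) \<longrightarrow> j \<subseteq> u)"

definition join :: "'a set set \<Rightarrow> 'a set set \<Rightarrow> 'a set" where
  "join P X = (THE j. is_join P X j)"

definition atoms :: "'a set set \<Rightarrow> 'a set set" where
  "atoms P = {a \<in> P. \<exists>b \<in> P. (\<forall>x \<in> P. b \<subseteq> x) \<and> b \<subset> a \<and>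
                 \<not> (\<exists>c \<in> P. b \<subset> c \<and> c \<subset> a)}"

definition bounded_below :: "'a set set \<Rightarrow> ('a set \<Rightarrow> 'a set \<Rightarrow> bool) \<Rightarrow> 'a set set \<Rightarrow> bool" where
  "bounded_below P lt S \<longleftrightarrow>
     (\<exists>a \<in> atoms P. (\<forall>s \<in> S. lt a s) \<and> a \<subset> join P S)"

definition NBB :: "'a set set \<Rightarrow> ('a set \<Rightarrow> 'a set \<Rightarrow> bool) \<Rightarrow> 'a set set \<Rightarrow> bool" where
  "NBB P lt T \<longleftrightarrow> (\<forall>S \<subseteq> T. \<not> bounded_below P lt S)"

definition induced_connected :: "nat \<Rightarrow> edge set \<Rightarrow> nat set \<Rightarrow> bool" where
  "induced_connected n E V \<longleftrightarrow> V \<subseteq> {1..n} \<and> V \<noteq> {} \<and>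
     (\<forall>u \<in> V. \<forall>v \<in> V. (u, v) \<in> conn (edges_within E V))"

definition icsets :: "nat \<Rightarrow> edge set \<Rightarrow> edge \<Rightarrow> edge \<Rightarrow> nat set set" where
  "icsets n E e f = {V. induced_connected n E V \<and> e \<in> edges_within E V \<and> f \<in> edges_within E V}"

definition minimal_icsets :: "nat \<Rightarrow> edge set \<Rightarrow> edge \<Rightarrow> edge \<Rightarrow> nat set set" where
  "minimal_icsets n E e f = {V \<in> icsets n E e f. \<not> (\<exists>W \<in> icsets n E e f. W \<subset> V)}"

definition crossing_closed_pair :: "nat \<Rightarrow> edge set \<Rightarrow> edge \<Rightarrow> edge \<Rightarrow> bool" where
  "crossing_closed_pair n E e f \<longleftrightarrow> (\<exists>!V. V \<in> minimal_icsets n E e f)"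

definition Jcl :: "nat \<Rightarrow> edge set \<Rightarrow> edge \<Rightarrow> edge \<Rightarrow> nat set" where
  "Jcl n E e f = (THE V. V \<in> minimal_icsets n E e f)"

definition crossing_closed :: "nat \<Rightarrow> edge set \<Rightarrow> bool" where
  "crossing_closed n E \<longleftrightarrow>
     (\<forall>e \<in> E. \<forall>f \<in> E. crosses e f \<longrightarrow> crossing_closed_pair n E e f)"

(* R: the (reflexive) total order \<unlhd> on E, as a relation; strict part \<lhd> *)
definition strict :: "(edge \<times> edge) set \<Rightarrow> edge \<Rightarrow> edge \<Rightarrow> bool" where
  "strict R h e \<longleftrightarrow> (h, e) \<in> R \<and> h \<noteq> e"

definition upper_crossing_closed :: "nat \<Rightarrow> edge set \<Rightarrow> (edge \<times> edge) set \<Rightarrow> bool" where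
  "upper_crossing_closed n E R \<longleftrightarrow> crossing_closed n E \<and>
     (\<forall>e \<in> E. \<forall>f \<in> E. crosses e f \<longrightarrow>
        (\<exists>h \<in> edges_within E (Jcl n E e f). strict R h e \<and> strict R h f))"

definition mk_edge :: "nat \<Rightarrow> nat \<Rightarrow> edge" where
  "mk_edge u v = (min u v, max u v)"

definition cycle_edge_sets :: "edge set \<Rightarrow> edge set set" where
  "cycle_edge_sets E = {C. C \<subseteq> E \<and> (\<exists>vs. distinct vs \<and> length vs \<ge> 3 \<and>
      C = {mk_edge (vs ! i) (vs ! ((i + 1) mod length vs)) | i. i < length vs})}"

definition smallest_edge :: "(edge \<times> edge) set \<Rightarrow> edge set \<Rightarrow> edge" where
  "smallest_edge R C = (THE c. c \<in> C \<and> (\<forall>d \<in> C. (c, d) \<in> R))"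

definition broken_circuits :: "edge set \<Rightarrow> (edge \<times> edge) set \<Rightarrow> edge set set" where
  "broken_circuits E R = (\<lambda>C. C - {smallest_edge R C}) ` cycle_edge_sets E"

definition NBC :: "edge set \<Rightarrow> (edge \<times> edge) set \<Rightarrow> edge set \<Rightarrow> bool" where
  "NBC E R S \<longleftrightarrow> S \<subseteq> E \<and> (\<forall>B \<in> broken_circuits E R. \<not> B \<subseteq> S)"

definition noncrossing_NBC :: "edge set \<Rightarrow> (edge \<times> edge) set \<Rightarrow> edge set \<Rightarrow> bool" where
  "noncrossing_NBC E R S \<longleftrightarrow> NBC E R S \<and> (\<forall>e \<in> S. \<forall>f \<in> S. \<not> crosses e f)"

definition atom_lt :: "(edge \<times> edge) set \<Rightarrow> edge set \<Rightarrow> edge set \<Rightarrow> bool" where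
  "atom_lt R a b \<longleftrightarrow> (\<exists>e f. a = {e} \<and> b = {f} \<and> strict R e f)"

end

theory Submission
  imports Defs "HOL-Library.Transitive_Closure_Table"
begin

lemma conn_sym: "(x,y) \<in> conn S \<Longrightarrow> (y,x) \<in> conn S"
proof -
  assume "(x,y) \<in> conn S"
  hence "(y,x) \<in> ((S \<union> S\<inverse>)\<^sup>*)\<inverse>" unfolding conn_def by simp
  hence "(y,x) \<in> ((S \<union> S\<inverse>)\<inverse>)\<^sup>*" by (simp add: rtrancl_converse)
  moreover have "(S \<union> S\<inverse>)\<inverse> = S \<union> S\<inverse>" by auto
  ultimately show ?thesis unfolding conn_def by simp
qed

lemma conn_trans: "(x,y) \<in> conn S \<Longrightarrow> (y,z) \<in> conn S \<Longrightarrow> (x,z) \<in> conn S"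
  unfolding conn_def by (rule rtrancl_trans)

lemma conn_edge: "e \<in> S \<Longrightarrow> (fst e, snd e) \<in> conn S"
  unfolding conn_def by (cases e) auto

lemma conn_edge': "(a,b) \<in> S \<Longrightarrow> (a, b) \<in> conn S"
  unfolding conn_def by auto

lemma conn_mono: "S \<subseteq> U \<Longrightarrow> (x,y) \<in> conn S \<Longrightarrow> (x,y) \<in> conn U"
  unfolding conn_def by (meson Un_mono converse_mono rtrancl_mono subsetD)

lemma conn_sub:
  assumes "\<forall>(x,y)\<in>S. x \<in> V \<and> y \<in> V" "(p,q) \<in> conn S"
  shows "p = q \<or> (p \<in> V \<and> q \<in> V)"
  using assms(2) unfolding conn_def
proof (induction rule: rtrancl_induct)
  case base then show ?case by simp
next
  case (step y z) then show ?case using assms(1) by auto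
qed

lemma conn_step_cases:
  assumes "(q,z) \<in> S \<union> S\<inverse>"
  shows "(q,z) \<in> S \<or> (z,q) \<in> S" using assms by auto

lemma inside_lemma:
  assumes SE: "\<forall>(x,y)\<in>S. x < y" and nc: "\<forall>e\<in>S. \<forall>f\<in>S. \<not> crosses e f"
    and xy: "(x,y) \<in> S" and pq: "(p,q) \<in> conn S" and xp: "x < p" "p < y"
    and npx: "(p,x) \<notin> conn S"
  shows "x < q \<and> q < y"
  using pq unfolding conn_def
proof (induction rule: rtrancl_induct)
  case base then show ?case using xp by simp
next
  case (step q z)
  have pz: "(p,z) \<in> conn S" using step(1,2) unfolding conn_def by (meson rtrancl.rtrancl_into_rtrancl)
  have zx: "z \<noteq> x" using pz npx by auto
  have zy: "z \<noteq> y"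
  proof
    assume "z = y"
    hence "(p,y) \<in> conn S" using pz by simp
    moreover have "(y,x) \<in> conn S" using conn_sym[OF conn_edge'[OF xy]] .
    ultimately show False using npx conn_trans by blast
  qed
  show ?case
  proof (rule ccontr)
    assume nz: "\<not> (x < z \<and> z < y)"
    show False
    proof (cases "y < z")
      case True
      have "(q,z) \<in> S"
      proof -
        have "(q,z) \<in> S \<or> (z,q) \<in> S" using step(2) by auto
        moreover have "(z,q) \<notin> S" using SE True step(3) by fastforce
        ultimately show ?thesis by blast
      qed
      moreover have "crosses (x,y) (q,z)" using step(3) True unfolding crosses_def by simp
      ultimately show False using nc xy by blast
    next
      case False
      hence "z < x" using nz zx zy by linarith
      have "(z,q) \<in> S"
      proof -
        have "(q,z) \<in> S \<or> (z,q) \<in> S" using step(2) by auto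
        moreover have "(q,z) \<notin> S" using SE \<open>z < x\<close> step(3) by fastforce
        ultimately show ?thesis by blast
      qed
      moreover have "crosses (z,q) (x,y)" using step(3) \<open>z < x\<close> unfolding crosses_def by simp
      ultimately show False using nc xy by blast
    qed
  qed
qed

lemma span_lemma:
  assumes SE: "\<forall>(x,y)\<in>S. x < y"
    and pq: "(p,q) \<in> conn S" and pb: "p < b" and bq: "b < q" and npb: "(p,b) \<notin> conn S"
  shows "\<exists>x y. (x,y) \<in> S \<and> x < b \<and> b < y \<and> (p,x) \<in> conn S"
  using pq bq unfolding conn_def
proof (induction rule: rtrancl_induct)
  case base then show ?case using pb by simp
next
  case (step q z)
  have pz: "(p,q) \<in> conn S" using step(1) unfolding conn_def by auto
  consider "q < b" | "q = b" | "b < q" by linarith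
  then show ?case
  proof cases
    case 1
    have "(q,z) \<in> S \<or> (z,q) \<in> S" using step(2) by auto
    moreover have "(z,q) \<notin> S" using SE 1 step(4) by fastforce
    ultimately have "(q,z) \<in> S" by blast
    then show ?thesis using 1 step(4) pz unfolding conn_def by blast
  next
    case 2 then show ?thesis using pz npb by simp
  next
    case 3 then show ?thesis using step(3) by blast
  qed
qed

lemma nc_conn:
  assumes SE: "\<forall>(x,y)\<in>S. x < y" and nc: "\<forall>e\<in>S. \<forall>f\<in>S. \<not> crosses e f"
    and ord: "a < b" "b < c" "c < d" and ac: "(a,c) \<in> conn S" and bd: "(b,d) \<in> conn S"
  shows "(a,b) \<in> conn S"
proof (rule ccontr)
  assume nab: "(a,b) \<notin> conn S"
  obtain x y where xy: "(x,y) \<in> S" "x < b" "b < y" "(a,x) \<in> conn S"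
    using span_lemma[OF SE ac ord(1)] ord nab by auto
  have nbx: "(b,x) \<notin> conn S"
    using nab xy(4) conn_trans conn_sym by blast
  have nbc: "(b,c) \<notin> conn S"
    using nab ac conn_trans conn_sym by blast
  obtain u v where uv: "(u,v) \<in> S" "u < c" "c < v" "(b,u) \<in> conn S"
    using span_lemma[OF SE bd ord(2)] ord nbc by auto
  have ncu: "(c,u) \<notin> conn S"
    using nbc uv(4) conn_trans conn_sym by blast
  have cx: "(c,x) \<in> conn S" using ac xy(4) conn_trans conn_sym by blast
  have "u < x" using inside_lemma[OF SE nc uv(1) cx _ _ ncu] uv by simp
  moreover have "x < u" using inside_lemma[OF SE nc xy(1) uv(4) _ _ nbx] xy by simp
  ultimately show False by simp
qed


definition cl :: "edge set \<Rightarrow> edge set \<Rightarrow> edge set" where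
  "cl E S = {e \<in> E. (fst e, snd e) \<in> conn S}"

lemma graph_onD: "graph_on n E \<Longrightarrow> e \<in> E \<Longrightarrow> 1 \<le> fst e \<and> fst e < snd e \<and> snd e \<le> n"
  unfolding graph_on_def by auto

lemma graph_on_lt: "graph_on n E \<Longrightarrow> \<forall>(x,y)\<in>E. x < y"
  unfolding graph_on_def by auto

lemma conn_cl: assumes "S \<subseteq> E" shows "conn (cl E S) = conn S"
proof -
  have "S \<subseteq> cl E S" using assms conn_edge unfolding cl_def by auto
  hence 1: "conn S \<subseteq> conn (cl E S)" using conn_mono by auto
  have "cl E S \<union> (cl E S)\<inverse> \<subseteq> conn S"
    unfolding cl_def using conn_sym by fastforce
  hence "(cl E S \<union> (cl E S)\<inverse>)\<^sup>* \<subseteq> (conn S)\<^sup>*" by (rule rtrancl_mono)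
  hence "conn (cl E S) \<subseteq> conn S" unfolding conn_def by simp
  with 1 show ?thesis by blast
qed

lemma components_E:
  "B \<in> components n S \<Longrightarrow> \<exists>v\<in>{1..n}. B = {w \<in> {1..n}. (v, w) \<in> conn S}"
  unfolding components_def by auto

lemma components_I:
  "v \<in> {1..n} \<Longrightarrow> {w \<in> {1..n}. (v, w) \<in> conn S} \<in> components n S"
  unfolding components_def by auto

lemma bond_closed:
  assumes "is_bond n E U" "graph_on n E" "e \<in> E" "(fst e, snd e) \<in> conn U"
  shows "e \<in> U"
proof -
  define B where "B = {w \<in> {1..n}. (fst e, w) \<in> conn U}"
  have fe: "fst e \<in> {1..n}" "snd e \<in> {1..n}" using graph_onD[OF assms(2,3)] by auto
  have "B \<in> components n U" unfolding B_def using components_I[OF fe(1)] .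
  hence "edges_within U B = edges_within E B" using assms(1) unfolding is_bond_def by auto
  moreover have "e \<in> edges_within E B" unfolding edges_within_def B_def
    using fe assms(3,4) by (auto simp: conn_def)
  ultimately show ?thesis unfolding edges_within_def by auto
qed

lemma nc_partition_conn:
  assumes g: "graph_on n E" and SE: "S \<subseteq> E" and nc: "\<forall>e\<in>S. \<forall>f\<in>S. \<not> crosses e f"
  shows "noncrossing_partition (components n S)"
  unfolding noncrossing_partition_def
proof (intro ballI impI notI)
  fix B B' assume B: "B \<in> components n S" and B': "B' \<in> components n S" and ne: "B \<noteq> B'"
    and ex: "\<exists>a b c d. a \<in> B \<and> c \<in> B \<and> b \<in> B' \<and> d \<in> B' \<and> a < b \<and> b < c \<and> c < d"
  obtain v where v: "v \<in> {1..n}" "B = {w \<in> {1..n}. (v, w) \<in> conn S}" using components_E[OF B] by blast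
  obtain v' where v': "v' \<in> {1..n}" "B' = {w \<in> {1..n}. (v', w) \<in> conn S}" using components_E[OF B'] by blast
  obtain a b c d where abcd: "a \<in> B" "c \<in> B" "b \<in> B'" "d \<in> B'" "a < b" "b < c" "c < d" using ex by blast
  have ac: "(a,c) \<in> conn S" using abcd v conn_sym conn_trans by blast
  have bd: "(b,d) \<in> conn S" using abcd v' conn_sym conn_trans by blast
  have SE': "\<forall>(x,y)\<in>S. x < y" using SE graph_on_lt[OF g] by auto
  have ab: "(a,b) \<in> conn S" using nc_conn[OF SE' nc abcd(5,6,7) ac bd] .
  have vv: "(v,v') \<in> conn S" using ab abcd(1,3) v v' conn_sym conn_trans by blast
  have "B = B'" unfolding v(2) v'(2) using vv conn_sym conn_trans by blast
  with ne show False ..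
qed

lemma cl_NC:
  assumes g: "graph_on n E" and SE: "S \<subseteq> E" and nc: "\<forall>e\<in>S. \<forall>f\<in>S. \<not> crosses e f"
  shows "cl E S \<in> NC n E"
proof -
  have cc: "components n (cl E S) = components n S" unfolding components_def conn_cl[OF SE] ..
  have "is_bond n E (cl E S)"
    unfolding is_bond_def
  proof (intro conjI ballI)
    show "cl E S \<subseteq> E" unfolding cl_def by auto
  next
    fix B assume "B \<in> components n (cl E S)"
    then obtain v where v: "B = {w \<in> {1..n}. (v, w) \<in> conn S}" using components_E cc by blast
    show "edges_within (cl E S) B = edges_within E B"
      unfolding edges_within_def cl_def v using conn_sym conn_trans by blast
  qed
  moreover have "noncrossing_partition (components n (cl E S))"
    using cc nc_partition_conn[OF g SE nc] by simp
  ultimately show ?thesis unfolding NC_def by simp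
qed

lemma join_unique: "is_join P X j \<Longrightarrow> join P X = j"
  unfolding join_def
proof (rule the_equality)
  fix j' assume "is_join P X j" "is_join P X j'"
  thus "j' = j" unfolding is_join_def by blast
qed

lemma join_cl:
  assumes g: "graph_on n E" and SE: "S \<subseteq> E" and nc: "\<forall>e\<in>S. \<forall>f\<in>S. \<not> crosses e f"
  shows "join (NC n E) ((\<lambda>e. {e}) ` S) = cl E S"
proof (rule join_unique)
  show "is_join (NC n E) ((\<lambda>e. {e}) ` S) (cl E S)"
    unfolding is_join_def
  proof (intro conjI ballI impI)
    show "cl E S \<in> NC n E" by (rule cl_NC[OF assms])
  next
    fix x assume "x \<in> (\<lambda>e. {e}) ` S"
    then show "x \<subseteq> cl E S" using SE conn_edge unfolding cl_def by auto
  next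
    fix u assume u: "u \<in> NC n E" and ub: "\<forall>x\<in>(\<lambda>e. {e}) ` S. x \<subseteq> u"
    have Su: "S \<subseteq> u" using ub by auto
    have bu: "is_bond n E u" using u unfolding NC_def by auto
    show "cl E S \<subseteq> u"
    proof
      fix e assume "e \<in> cl E S"
      hence "e \<in> E" "(fst e, snd e) \<in> conn S" unfolding cl_def by auto
      then show "e \<in> u" using bond_closed[OF bu g] conn_mono[OF Su] by blast
    qed
  qed
qed

lemma cl_empty: "graph_on n E \<Longrightarrow> cl E {} = {}"
  unfolding cl_def conn_def using graph_on_lt by fastforce

lemma cl_single: assumes g: "graph_on n E" and e: "e \<in> E" shows "cl E {e} = {e}"
proof -
  have "\<forall>(x,y)\<in>{e}. x \<in> {fst e, snd e} \<and> y \<in> {fst e, snd e}" by auto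
  note cs = conn_sub[OF this]
  show ?thesis
  proof
    show "cl E {e} \<subseteq> {e}"
    proof
      fix f assume "f \<in> cl E {e}"
      hence f: "f \<in> E" "(fst f, snd f) \<in> conn {e}" unfolding cl_def by auto
      have lt: "fst f < snd f" "fst e < snd e" using graph_onD[OF g] f e by auto
      have "fst f \<in> {fst e, snd e} \<and> snd f \<in> {fst e, snd e}" using cs[OF f(2)] lt by auto
      then have "f = e" using lt by (cases e, cases f) auto
      thus "f \<in> {e}" by simp
    qed
  next
    show "{e} \<subseteq> cl E {e}" using e conn_edge unfolding cl_def by auto
  qed
qed

lemma atoms_NC:
  assumes g: "graph_on n E"
  shows "atoms (NC n E) = (\<lambda>e. {e}) ` E"
proof -
  have empty: "{} \<in> NC n E" using cl_NC[OF g, of "{}"] cl_empty[OF g] by simp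
  have single: "{e} \<in> NC n E" if "e \<in> E" for e
    using cl_NC[OF g, of "{e}"] cl_single[OF g that] that by (simp add: crosses_def)
  have sub: "a \<subseteq> E" if "a \<in> NC n E" for a using that unfolding NC_def is_bond_def by auto
  show ?thesis
  proof
    show "atoms (NC n E) \<subseteq> (\<lambda>e. {e}) ` E"
    proof
      fix a assume "a \<in> atoms (NC n E)"
      then obtain b where a: "a \<in> NC n E" and b: "b \<in> NC n E" "\<forall>x\<in>NC n E. b \<subseteq> x" "b \<subset> a"
        "\<not> (\<exists>c\<in>NC n E. b \<subset> c \<and> c \<subset> a)" unfolding atoms_def by blast
      have "b = {}" using b(2) empty by auto
      then obtain e where e: "e \<in> a" using b(3) by auto
      have eE: "e \<in> E" using sub[OF a] e by auto
      have "a = {e}" using b(4) single[OF eE] e \<open>b = {}\<close> by blast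
      thus "a \<in> (\<lambda>e. {e}) ` E" using eE by auto
    qed
  next
    show "(\<lambda>e. {e}) ` E \<subseteq> atoms (NC n E)"
    proof
      fix a assume "a \<in> (\<lambda>e. {e}) ` E"
      then obtain e where e: "e \<in> E" "a = {e}" by auto
      show "a \<in> atoms (NC n E)" unfolding atoms_def
        using single[OF e(1)] empty e(2) by blast
    qed
  qed
qed


lemma Jcl_min:
  assumes "crossing_closed_pair n E e f"
  shows "Jcl n E e f \<in> minimal_icsets n E e f"
  using assms unfolding crossing_closed_pair_def Jcl_def by (rule theI')

lemma Jcl_eq:
  assumes "crossing_closed_pair n E e f" "V \<in> minimal_icsets n E e f"
  shows "V = Jcl n E e f"
  using assms Jcl_min unfolding crossing_closed_pair_def by blast

lemma restrict_conn:
  assumes g: "graph_on n E" and UE: "U \<subseteq> E" and a: "a \<in> {1..n}"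
    and B: "B = {w \<in> {1..n}. (a, w) \<in> conn U}" and x: "x \<in> B"
    and xy: "(x,y) \<in> conn U"
  shows "(x,y) \<in> conn (edges_within U B) \<and> y \<in> B"
  using xy unfolding conn_def
proof (induction rule: rtrancl_induct)
  case base then show ?case using x by (simp add: conn_def)
next
  case (step y z)
  have yB: "y \<in> B" using step(3) by simp
  have ay: "(a,y) \<in> conn U" using yB B by simp
  have "(y,z) \<in> U \<or> (z,y) \<in> U" using step(2) by auto
  hence zn: "z \<in> {1..n}" using UE graph_onD[OF g] by fastforce
  have "(y,z) \<in> conn U" using step(2) unfolding conn_def by auto
  hence "(a,z) \<in> conn U" using ay conn_trans by blast
  hence zB: "z \<in> B" using zn B by simp
  have "(y,z) \<in> edges_within U B \<or> (z,y) \<in> edges_within U B"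
    using \<open>(y,z) \<in> U \<or> (z,y) \<in> U\<close> yB zB unfolding edges_within_def by auto
  hence "(y,z) \<in> conn (edges_within U B)"
    using conn_edge' conn_sym by blast
  moreover have "(x,y) \<in> conn (edges_within U B)" using step(3) unfolding conn_def by simp
  ultimately have "(x,z) \<in> conn (edges_within U B)" using conn_trans by blast
  then show ?case using zB unfolding conn_def by simp
qed

lemma join_cross:
  assumes g: "graph_on n E" and cc: "crossing_closed n E" and e: "e \<in> E" and f: "f \<in> E"
    and ef: "crosses e f"
  shows "join (NC n E) {{e},{f}} = edges_within E (Jcl n E e f)"
    and "e \<in> edges_within E (Jcl n E e f)"
proof -
  define J where "J = Jcl n E e f"
  have ccp: "crossing_closed_pair n E e f" using cc e f ef unfolding crossing_closed_def by blast
  have Jm: "J \<in> minimal_icsets n E e f" unfolding J_def by (rule Jcl_min[OF ccp])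
  hence Ji: "J \<in> icsets n E e f" unfolding minimal_icsets_def by simp
  hence ic: "induced_connected n E J" and eJ: "e \<in> edges_within E J" and fJ: "f \<in> edges_within E J"
    unfolding icsets_def by auto
  have Jn: "J \<subseteq> {1..n}" and Jc: "\<forall>u\<in>J. \<forall>v\<in>J. (u,v) \<in> conn (edges_within E J)"
    using ic unfolding induced_connected_def by auto
  define W where "W = edges_within E J"
  have "\<forall>(x,y)\<in>W. x \<in> J \<and> y \<in> J" unfolding W_def edges_within_def by auto
  note cs = conn_sub[OF this]
  have lt: "\<forall>(x,y)\<in>E. x < y" using graph_on_lt[OF g] .
  have compW: "B = J \<or> (\<exists>v. B = {v})" if BW: "B \<in> components n W" for B
  proof -
    obtain v where v: "v \<in> {1..n}" "B = {w \<in> {1..n}. (v, w) \<in> conn W}" using components_E[OF BW] by blast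
    show ?thesis
    proof (cases "v \<in> J")
      case True
      have "B = J" unfolding v(2) using True Jn Jc cs unfolding W_def by blast
      thus ?thesis ..
    next
      case False
      have "B = {v}" unfolding v(2) using False v(1) cs by (auto simp: conn_def)
      thus ?thesis by blast
    qed
  qed
  have ewsing: "edges_within X {v} = {}" if "X \<subseteq> E" for X v
    using lt that unfolding edges_within_def by fastforce
  have WNC: "W \<in> NC n E"
    unfolding NC_def
  proof (intro CollectI conjI)
    show "is_bond n E W" unfolding is_bond_def
    proof (intro conjI ballI)
      show "W \<subseteq> E" unfolding W_def edges_within_def by auto
    next
      fix B assume "B \<in> components n W"
      then consider "B = J" | v where "B = {v}" using compW by blast
      then show "edges_within W B = edges_within E B"
      proof cases
        case 1 then show ?thesis unfolding W_def edges_within_def by auto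
      next
        case 2
        have "W \<subseteq> E" unfolding W_def edges_within_def by auto
        then show ?thesis using 2 ewsing[of W v] ewsing[of E v] by simp
      qed
    qed
  next
    show "noncrossing_partition (components n W)"
      unfolding noncrossing_partition_def
    proof (intro ballI impI notI)
      fix B B' assume B: "B \<in> components n W" and B': "B' \<in> components n W" and ne: "B \<noteq> B'"
        and ex: "\<exists>a b c d. a \<in> B \<and> c \<in> B \<and> b \<in> B' \<and> d \<in> B' \<and> a < b \<and> b < c \<and> c < d"
      obtain a b c d where abcd: "a \<in> B" "c \<in> B" "b \<in> B'" "d \<in> B'" "a < b" "b < c" "c < d" using ex by blast
      have "B = J" using compW[OF B] abcd by auto
      moreover have "B' = J" using compW[OF B'] abcd by auto
      ultimately show False using ne by simp
    qed
  qed
  have join: "is_join (NC n E) {{e},{f}} W"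
    unfolding is_join_def
  proof (intro conjI ballI impI)
    show "W \<in> NC n E" by (rule WNC)
  next
    fix x assume "x \<in> {{e},{f}}" then show "x \<subseteq> W" using eJ fJ unfolding W_def by auto
  next
    fix U assume U: "U \<in> NC n E" and ub: "\<forall>x\<in>{{e}, {f}}. x \<subseteq> U"
    have eU: "e \<in> U" and fU: "f \<in> U" using ub by auto
    have bU: "is_bond n E U" and ncU: "noncrossing_partition (components n U)" using U unfolding NC_def by auto
    have UE: "U \<subseteq> E" using bU unfolding is_bond_def by simp
    obtain a c where ac: "e = (a,c)" by (cases e)
    obtain b d where bd: "f = (b,d)" by (cases f)
    have an: "a \<in> {1..n}" "c \<in> {1..n}" using graph_onD[OF g e] ac by auto
    have bn: "b \<in> {1..n}" "d \<in> {1..n}" using graph_onD[OF g f] bd by auto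
    have acU: "(a,c) \<in> conn U" using conn_edge'[of a c U] eU ac by simp
    have bdU: "(b,d) \<in> conn U" using conn_edge'[of b d U] fU bd by simp
    define Ba where "Ba = {w \<in> {1..n}. (a, w) \<in> conn U}"
    define Bb where "Bb = {w \<in> {1..n}. (b, w) \<in> conn U}"
    have Ba: "Ba \<in> components n U" unfolding Ba_def using components_I[OF an(1)] .
    have Bb: "Bb \<in> components n U" unfolding Bb_def using components_I[OF bn(1)] .
    have memb: "a \<in> Ba" "c \<in> Ba" "b \<in> Bb" "d \<in> Bb" unfolding Ba_def Bb_def
      using an bn acU bdU by (auto simp: conn_def)
    have abU: "(a,b) \<in> conn U"
    proof (rule ccontr)
      assume nab: "(a,b) \<notin> conn U"
      have "Ba \<noteq> Bb" using memb(1) nab conn_sym unfolding Bb_def by blast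
      moreover have "a < b \<and> b < c \<and> c < d \<or> b < a \<and> a < d \<and> d < c"
        using ef ac bd unfolding crosses_def by auto
      ultimately show False using ncU Ba Bb memb unfolding noncrossing_partition_def by metis
    qed
    have BaI: "Ba \<in> icsets n E e f"
      unfolding icsets_def
    proof (intro CollectI conjI)
      have ew: "edges_within U Ba = edges_within E Ba" using bU Ba unfolding is_bond_def by blast
      show "induced_connected n E Ba" unfolding induced_connected_def
      proof (intro conjI ballI)
        show "Ba \<subseteq> {1..n}" unfolding Ba_def by auto
        show "Ba \<noteq> {}" using memb by auto
      next
        fix u v assume u: "u \<in> Ba" and v: "v \<in> Ba"
        have "(u,v) \<in> conn U" using u v unfolding Ba_def using conn_sym conn_trans by blast
        then show "(u,v) \<in> conn (edges_within E Ba)"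
          using restrict_conn[OF g UE an(1) Ba_def u] ew by simp
      qed
      have bB: "b \<in> Ba" "d \<in> Ba" unfolding Ba_def using bn abU bdU conn_trans by auto
      show "e \<in> edges_within E Ba" using e memb ac unfolding edges_within_def by auto
      show "f \<in> edges_within E Ba" using f bB bd unfolding edges_within_def by auto
    qed
    have fin: "finite (icsets n E e f)"
    proof (rule finite_subset)
      show "icsets n E e f \<subseteq> Pow {1..n}" unfolding icsets_def induced_connected_def by auto
    qed simp
    obtain m where m: "m \<in> icsets n E e f" "m \<subseteq> Ba" "\<forall>b\<in>icsets n E e f. b \<subseteq> m \<longrightarrow> m = b"
      using finite_has_minimal2[OF fin BaI] by blast
    have "m \<in> minimal_icsets n E e f" unfolding minimal_icsets_def using m by blast
    hence "m = J" unfolding J_def by (rule Jcl_eq[OF ccp])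
    hence "W \<subseteq> edges_within E Ba" unfolding W_def edges_within_def using m(2) by auto
    also have "\<dots> = edges_within U Ba" using bU Ba unfolding is_bond_def by blast
    also have "\<dots> \<subseteq> U" unfolding edges_within_def by auto
    finally show "W \<subseteq> U" .
  qed
  show "join (NC n E) {{e},{f}} = edges_within E (Jcl n E e f)"
    using join_unique[OF join] unfolding W_def J_def .
  show "e \<in> edges_within E (Jcl n E e f)" using eJ unfolding J_def .
qed


lemma mk_edge_eq:
  "mk_edge p q = mk_edge p' q' \<Longrightarrow> p \<noteq> q \<Longrightarrow> (p = p' \<and> q = q') \<or> (p = q' \<and> q = p')"
  unfolding mk_edge_def by (auto simp: min_def max_def split: if_splits)

lemma mk_edge_conn: "mk_edge p q \<in> S \<Longrightarrow> (p,q) \<in> conn S"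
proof -
  assume "mk_edge p q \<in> S"
  hence "(min p q, max p q) \<in> conn S" using conn_edge'[of "min p q" "max p q" S] unfolding mk_edge_def by simp
  then show ?thesis by (cases "p \<le> q") (auto simp: min_def max_def dest: conn_sym)
qed

lemma mk_edge_in:
  assumes "\<forall>(x,y)\<in>S. x < y" "(p,q) \<in> S \<or> (q,p) \<in> S"
  shows "mk_edge p q \<in> S"
  using assms unfolding mk_edge_def by (auto simp: min_def max_def)

lemma mod_shift_ne:
  fixes i k L :: nat
  assumes "i < L" "0 < k" "k < L"
  shows "(i + k) mod L \<noteq> i"
proof (cases "i + k < L")
  case True then show ?thesis using assms by simp
next
  case False
  hence "(i + k) mod L = i + k - L" using assms by (simp add: mod_if)
  then show ?thesis using assms False by arith
qed

lemma cycle_conn: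
  assumes C: "C \<in> cycle_edge_sets E" and c: "c \<in> C"
  shows "C - {c} \<noteq> {} \<and> (fst c, snd c) \<in> conn (C - {c})"
proof -
  obtain vs where vs: "distinct vs" "length vs \<ge> 3"
    "C = {mk_edge (vs ! i) (vs ! ((i + 1) mod length vs)) | i. i < length vs}"
    using C unfolding cycle_edge_sets_def by blast
  define L where "L = length vs"
  define nx where "nx j = (j + 1) mod L" for j
  define ed where "ed j = mk_edge (vs ! j) (vs ! (nx j))" for j
  have L3: "L \<ge> 3" using vs L_def by simp
  have Ceq: "C = {ed i | i. i < L}" using vs(3) unfolding ed_def nx_def L_def by simp
  obtain i0 where i0: "i0 < L" "c = ed i0" using c Ceq by blast
  have nxL: "nx j < L" for j unfolding nx_def using L3 by simp
  have neq: "vs ! j \<noteq> vs ! (nx j)" if "j < L" for j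
  proof -
    have "nx j \<noteq> j" unfolding nx_def using mod_shift_ne[of j L 1] that L3 by simp
    then show ?thesis using vs(1) nth_eq_iff_index_eq[OF vs(1)] that nxL unfolding L_def by metis
  qed
  have inj: "j = i0" if j: "j < L" "ed j = ed i0" for j
  proof -
    have "(vs ! j = vs ! i0 \<and> vs ! (nx j) = vs ! (nx i0)) \<or> (vs ! j = vs ! (nx i0) \<and> vs ! (nx j) = vs ! i0)"
      using mk_edge_eq[OF j(2)[unfolded ed_def]] neq[OF j(1)] by simp
    then show ?thesis
    proof
      assume "vs ! j = vs ! i0 \<and> vs ! (nx j) = vs ! (nx i0)"
      then show ?thesis using nth_eq_iff_index_eq[OF vs(1)] j(1) i0(1) unfolding L_def by metis
    next
      assume h: "vs ! j = vs ! (nx i0) \<and> vs ! (nx j) = vs ! i0"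
      have 1: "j = nx i0" using h nth_eq_iff_index_eq[OF vs(1)] j(1) nxL unfolding L_def by metis
      have 2: "nx j = i0" using h nth_eq_iff_index_eq[OF vs(1)] i0(1) nxL unfolding L_def by metis
      have "(i0 + 2) mod L = i0" using 1 2 unfolding nx_def by (simp add: mod_Suc_eq)
      then show ?thesis using mod_shift_ne[of i0 L 2] i0(1) L3 by simp
    qed
  qed
  have edge: "(vs ! j, vs ! (nx j)) \<in> conn (C - {c})" if "j < L" "j \<noteq> i0" for j
  proof -
    have "ed j \<in> C - {c}" using that inj i0 Ceq by blast
    then show ?thesis unfolding ed_def by (rule mk_edge_conn)
  qed
  have chain: "t < L \<Longrightarrow> (vs ! (nx i0), vs ! ((i0 + 1 + t) mod L)) \<in> conn (C - {c})" for t
  proof (induction t)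
    case 0 then show ?case unfolding nx_def conn_def by simp
  next
    case (Suc t)
    define j where "j = (i0 + 1 + t) mod L"
    have jL: "j < L" unfolding j_def using L3 by simp
    have ji: "j \<noteq> i0" unfolding j_def using mod_shift_ne[of i0 L "Suc t"] i0(1) Suc(2) by simp
    have "nx j = (i0 + 1 + Suc t) mod L" unfolding nx_def j_def by (simp add: mod_Suc_eq)
    then show ?case using Suc edge[OF jL ji] conn_trans unfolding j_def by fastforce
  qed
  have "(vs ! (nx i0), vs ! i0) \<in> conn (C - {c})" using chain[of "L - 1"] L3 i0(1) by simp
  then have "(vs ! i0, vs ! (nx i0)) \<in> conn (C - {c})" using conn_sym by simp
  hence conn_c: "(fst c, snd c) \<in> conn (C - {c})"
    unfolding i0(2) ed_def mk_edge_def by (auto simp: min_def max_def dest: conn_sym)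
  have "nx i0 \<noteq> i0" unfolding nx_def using mod_shift_ne[of i0 L 1] i0(1) L3 by simp
  hence "ed (nx i0) \<in> C - {c}" using inj[of "nx i0"] nxL Ceq i0(2) by auto
  then show ?thesis using conn_c by blast
qed

lemma rtrancl_path_conv: "(u,v) \<in> r\<^sup>* \<Longrightarrow> \<exists>xs. rtrancl_path (\<lambda>a b. (a,b) \<in> r) u xs v"
proof -
  assume "(u,v) \<in> r\<^sup>*"
  hence "(\<lambda>a b. (a,b) \<in> r)\<^sup>*\<^sup>* u v" by (simp add: rtranclp_rtrancl_eq)
  then show ?thesis by (simp add: rtranclp_eq_rtrancl_path)
qed

lemma path_cycle:
  assumes g: "graph_on n E" and SE: "S \<subseteq> E" and x: "x \<in> E" "x \<notin> S"
    and conn: "(fst x, snd x) \<in> conn S"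
  shows "\<exists>C \<in> cycle_edge_sets E. x \<in> C \<and> C \<subseteq> S \<union> {x}"
proof -
  define u where "u = fst x"
  define v where "v = snd x"
  have xuv: "x = (u,v)" unfolding u_def v_def by simp
  have uv: "u < v" using graph_onD[OF g x(1)] unfolding u_def v_def by simp
  have lt: "\<forall>(a,b)\<in>S. a < b" using SE graph_on_lt[OF g] by auto
  define r where "r = (\<lambda>a b. (a,b) \<in> S \<union> S\<inverse>)"
  obtain xs where "rtrancl_path r u xs v"
    using rtrancl_path_conv[of u v "S \<union> S\<inverse>"] conn unfolding conn_def r_def u_def v_def by blast
  then obtain ys where p: "rtrancl_path r u ys v" and d: "distinct (u # ys)"
    using rtrancl_path_distinct by metis
  have ysne: "ys \<noteq> []" using p uv by (cases rule: rtrancl_path.cases) auto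
  have lasty: "last ys = v" using rtrancl_path_last[OF p ysne] .
  have nth: "r ((u # ys) ! i) (ys ! i)" if "i < length ys" for i using rtrancl_path_nth[OF p that] .
  have len2: "length ys \<ge> 2"
  proof (rule ccontr)
    assume "\<not> length ys \<ge> 2"
    moreover have "length ys > 0" using ysne by simp
    ultimately have "length ys = 1" by linarith
    hence "ys = [v]" using lasty by (cases ys) auto
    hence "r u v" using nth[of 0] by simp
    hence "(u,v) \<in> S \<or> (v,u) \<in> S" unfolding r_def by auto
    then show False using x(2) xuv lt uv by auto
  qed
  define vs where "vs = u # ys"
  define L where "L = length vs"
  have L3: "L \<ge> 3" unfolding L_def vs_def using len2 by simp
  define C where "C = {mk_edge (vs ! i) (vs ! ((i + 1) mod length vs)) | i. i < length vs}"
  have Csub: "C \<subseteq> S \<union> {x}"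
  proof
    fix e assume "e \<in> C"
    then obtain i where i: "i < L" "e = mk_edge (vs ! i) (vs ! ((i + 1) mod L))"
      unfolding C_def L_def by blast
    show "e \<in> S \<union> {x}"
    proof (cases "i + 1 < L")
      case True
      hence "(i+1) mod L = i + 1" by simp
      moreover have "vs ! (i+1) = ys ! i" unfolding vs_def by simp
      moreover have "r (vs ! i) (ys ! i)" using nth[of i] True unfolding vs_def L_def by simp
      ultimately have "e = mk_edge (vs ! i) (ys ! i)" "(vs ! i, ys ! i) \<in> S \<or> (ys ! i, vs ! i) \<in> S"
        using i unfolding r_def by auto
      then show ?thesis using mk_edge_in[OF lt] by auto
    next
      case False
      hence iL: "i = L - 1" using i by simp
      hence "(i+1) mod L = 0" using L3 by simp
      moreover have "vs ! i = v" using iL lasty ysne unfolding vs_def L_def by (simp add: last_conv_nth)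
      ultimately have "e = mk_edge v u" using i unfolding vs_def by simp
      then show ?thesis using xuv uv unfolding mk_edge_def by simp
    qed
  qed
  have xC: "x \<in> C"
  proof -
    have "(L - 1 + 1) mod L = 0" using L3 by simp
    moreover have "vs ! (L - 1) = v" using lasty ysne unfolding vs_def L_def by (simp add: last_conv_nth)
    ultimately have "mk_edge (vs ! (L-1)) (vs ! ((L - 1 + 1) mod L)) = x"
      unfolding vs_def using xuv uv by (simp add: mk_edge_def)
    moreover have "L - 1 < L" using L3 by simp
    ultimately show ?thesis unfolding C_def L_def by blast
  qed
  have "C \<in> cycle_edge_sets E" unfolding cycle_edge_sets_def
    using Csub SE x(1) d L3 unfolding vs_def L_def C_def by blast
  then show ?thesis using xC Csub by blast
qed


lemma atom_lt_single: "atom_lt R {x} {y} \<longleftrightarrow> strict R x y"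
  unfolding atom_lt_def by auto

lemma smallest_char:
  assumes lo: "linear_order_on E R" and CE: "C \<subseteq> E" and c: "c \<in> C" and m: "\<forall>d\<in>C. (c,d) \<in> R"
  shows "smallest_edge R C = c"
  unfolding smallest_edge_def
proof (rule the_equality)
  show "c \<in> C \<and> (\<forall>d\<in>C. (c, d) \<in> R)" using c m by simp
next
  fix c' assume "c' \<in> C \<and> (\<forall>d\<in>C. (c', d) \<in> R)"
  hence "(c',c) \<in> R" "(c,c') \<in> R" using c m by auto
  moreover have "antisym R" using lo unfolding linear_order_on_def partial_order_on_def by simp
  ultimately show "c' = c" unfolding antisym_def by blast
qed

lemma min_exists:
  assumes lo: "linear_order_on E R" and fin: "finite C" and ne: "C \<noteq> {}" and CE: "C \<subseteq> E"
  shows "\<exists>c\<in>C. \<forall>d\<in>C. (c,d) \<in> R"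
  using fin ne CE
proof (induction C rule: finite_ne_induct)
  case (singleton x)
  have "refl_on E R" using lo unfolding linear_order_on_def partial_order_on_def preorder_on_def by simp
  then show ?case using singleton unfolding refl_on_def by auto
next
  case (insert x F)
  obtain c where c: "c \<in> F" "\<forall>d\<in>F. (c,d) \<in> R" using insert by auto
  have refl: "refl_on E R" and tr: "trans R" and tot: "total_on E R"
    using lo unfolding linear_order_on_def partial_order_on_def preorder_on_def by auto
  have xE: "x \<in> E" "c \<in> E" using insert c by auto
  show ?case
  proof (cases "(x,c) \<in> R")
    case True
    have "\<forall>d\<in>insert x F. (x,d) \<in> R"
      using True c(2) tr refl xE unfolding trans_def refl_on_def by blast
    then show ?thesis by blast
  next
    case False
    have "x \<noteq> c" using insert c by auto
    hence "(c,x) \<in> R" using False tot xE unfolding total_on_def by blast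
    then show ?thesis using c by blast
  qed
qed

theorem lemma3p9:
  fixes n k :: nat and E :: "edge set" and R :: "(edge \<times> edge) set"
  assumes "graph_on n E"
    and "linear_order_on E R"
    and "upper_crossing_closed n E R"
  shows "{T. T \<subseteq> atoms (NC n E) \<and> card T = k \<and> NBB (NC n E) (atom_lt R) T}
         = (\<lambda>S. (\<lambda>e. {e}) ` S) ` {S. noncrossing_NBC E R S \<and> card S = k}"
proof -
  note g = assms(1) and lo = assms(2)
  have cc: "crossing_closed n E" using assms(3) unfolding upper_crossing_closed_def by simp
  have at: "atoms (NC n E) = (\<lambda>e. {e}) ` E" by (rule atoms_NC[OF g])
  have finE: "finite E"
  proof (rule finite_subset)
    show "E \<subseteq> {1..n} \<times> {1..n}" using g unfolding graph_on_def by auto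
  qed simp
  have refl: "refl_on E R" using lo unfolding linear_order_on_def partial_order_on_def preorder_on_def by simp
  have inj: "inj (\<lambda>e::edge. {e})" by (simp add: inj_def)
  show ?thesis
  proof (intro equalityI subsetI)
    fix T assume "T \<in> {T. T \<subseteq> atoms (NC n E) \<and> card T = k \<and> NBB (NC n E) (atom_lt R) T}"
    hence Tat: "T \<subseteq> (\<lambda>e. {e}) ` E" and Tk: "card T = k" and nbb: "NBB (NC n E) (atom_lt R) T"
      using at by auto
    define S where "S = {e \<in> E. {e} \<in> T}"
    have TS: "T = (\<lambda>e. {e}) ` S" unfolding S_def using Tat by auto
    have SE: "S \<subseteq> E" unfolding S_def by auto
    have Sk: "card S = k" using Tk TS card_image[OF inj_on_subset[OF inj]] by simp
    have nc: "\<forall>e\<in>S. \<forall>f\<in>S. \<not> crosses e f"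
    proof (intro ballI notI)
      fix e f assume e: "e \<in> S" and f: "f \<in> S" and ef: "crosses e f"
      have eE: "e \<in> E" and fE: "f \<in> E" using e f SE by auto
      obtain h where h: "h \<in> edges_within E (Jcl n E e f)" "strict R h e" "strict R h f"
        using assms(3) eE fE ef unfolding upper_crossing_closed_def by blast
      have j: "join (NC n E) {{e},{f}} = edges_within E (Jcl n E e f)"
        and eJ: "e \<in> edges_within E (Jcl n E e f)" using join_cross[OF g cc eE fE ef] by auto
      have hE: "h \<in> E" using h(1) unfolding edges_within_def by simp
      have "bounded_below (NC n E) (atom_lt R) {{e},{f}}"
        unfolding bounded_below_def
      proof (intro bexI[of _ "{h}"] conjI ballI)
        show "{h} \<in> atoms (NC n E)" using at hE by simp
      next
        fix s assume "s \<in> {{e},{f}}" then show "atom_lt R {h} s" using h(2,3) unfolding atom_lt_def by blast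
      next
        show "{h} \<subset> join (NC n E) {{e}, {f}}" unfolding j
      proof -
        have "h \<noteq> e" using h(2) unfolding strict_def by simp
        then show "{h} \<subset> edges_within E (Jcl n E e f)" using h(1) eJ by (metis empty_subsetI insert_subset psubsetI singletonD)
      qed
      qed
      moreover have "{{e},{f}} \<subseteq> T" using e f TS by auto
      ultimately show False using nbb unfolding NBB_def by blast
    qed
    have nbc: "NBC E R S" unfolding NBC_def
    proof (intro conjI ballI notI)
      show "S \<subseteq> E" by (rule SE)
    next
      fix B assume B: "B \<in> broken_circuits E R" and BS: "B \<subseteq> S"
      obtain C where C: "C \<in> cycle_edge_sets E" "B = C - {smallest_edge R C}"
        using B unfolding broken_circuits_def by blast
      have CE: "C \<subseteq> E" using C(1) unfolding cycle_edge_sets_def by simp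
      have Cne: "C \<noteq> {}"
      proof
        assume "C = {}"
        obtain vs where vs: "length vs \<ge> 3"
          "C = {mk_edge (vs ! i) (vs ! ((i + 1) mod length vs)) | i. i < length vs}"
          using C(1) unfolding cycle_edge_sets_def by blast
        have "(0::nat) < length vs" using vs(1) by linarith
        hence "mk_edge (vs ! 0) (vs ! ((0 + 1) mod length vs)) \<in> C" unfolding vs(2) by blast
        with \<open>C = {}\<close> show False by simp
      qed
      obtain c where c: "c \<in> C" "\<forall>d\<in>C. (c,d) \<in> R"
        using min_exists[OF lo finite_subset[OF CE finE] Cne CE] by blast
      have sc: "smallest_edge R C = c" by (rule smallest_char[OF lo CE c])
      define S' where "S' = C - {c}"
      have S'S: "S' \<subseteq> S" using BS C(2) sc unfolding S'_def by simp
      have S'E: "S' \<subseteq> E" using S'S SE by auto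
      have nc': "\<forall>e\<in>S'. \<forall>f\<in>S'. \<not> crosses e f" using nc S'S by blast
      have jc: "join (NC n E) ((\<lambda>e. {e}) ` S') = cl E S'" by (rule join_cl[OF g S'E nc'])
      have cc': "S' \<noteq> {}" "(fst c, snd c) \<in> conn S'" using cycle_conn[OF C(1) c(1)] unfolding S'_def by auto
      have cE: "c \<in> E" using c CE by auto
      have ccl: "c \<in> cl E S'" unfolding cl_def using cE cc' by simp
      obtain d where d: "d \<in> S'" using cc' by blast
      have dcl: "d \<in> cl E S'" unfolding cl_def using d S'E conn_edge by auto
      have "bounded_below (NC n E) (atom_lt R) ((\<lambda>e. {e}) ` S')"
        unfolding bounded_below_def
      proof (intro bexI[of _ "{c}"] conjI ballI)
        show "{c} \<in> atoms (NC n E)" using at cE by simp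
      next
        fix s assume "s \<in> (\<lambda>e. {e}) ` S'"
        then obtain t where t: "t \<in> S'" "s = {t}" by blast
        have "(c,t) \<in> R" "c \<noteq> t" using t c unfolding S'_def by auto
        then show "atom_lt R {c} s" using t atom_lt_single unfolding strict_def by simp
      next
        have "d \<noteq> c" using d unfolding S'_def by simp
        then show "{c} \<subset> join (NC n E) ((\<lambda>e. {e}) ` S')" unfolding jc using ccl dcl by blast
      qed
      moreover have "(\<lambda>e. {e}) ` S' \<subseteq> T" using S'S TS by auto
      ultimately show False using nbb unfolding NBB_def by blast
    qed
    show "T \<in> (\<lambda>S. (\<lambda>e. {e}) ` S) ` {S. noncrossing_NBC E R S \<and> card S = k}"
      using TS nbc nc Sk unfolding noncrossing_NBC_def by blast
  next
    fix T assume "T \<in> (\<lambda>S. (\<lambda>e. {e}) ` S) ` {S. noncrossing_NBC E R S \<and> card S = k}"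
    then obtain S where TS: "T = (\<lambda>e. {e}) ` S" and nnbc: "noncrossing_NBC E R S" and Sk: "card S = k"
      by blast
    have SE: "S \<subseteq> E" and nc: "\<forall>e\<in>S. \<forall>f\<in>S. \<not> crosses e f"
      and nbc: "\<forall>B \<in> broken_circuits E R. \<not> B \<subseteq> S"
      using nnbc unfolding noncrossing_NBC_def NBC_def by auto
    have Tat: "T \<subseteq> atoms (NC n E)" using TS SE at by auto
    have Tk: "card T = k" using Sk TS card_image[OF inj_on_subset[OF inj]] by simp
    have "NBB (NC n E) (atom_lt R) T" unfolding NBB_def
    proof (intro allI impI notI)
      fix X assume XT: "X \<subseteq> T" and bb: "bounded_below (NC n E) (atom_lt R) X"
      define S'' where "S'' = {e. {e} \<in> X}"
      have XS: "X = (\<lambda>e. {e}) ` S''" unfolding S''_def using XT TS by auto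
      have S''S: "S'' \<subseteq> S" unfolding S''_def using XT TS by auto
      have S''E: "S'' \<subseteq> E" using S''S SE by auto
      have nc'': "\<forall>e\<in>S''. \<forall>f\<in>S''. \<not> crosses e f" using nc S''S by blast
      obtain a where a: "a \<in> atoms (NC n E)" "\<forall>s\<in>X. atom_lt R a s" "a \<subset> join (NC n E) X"
        using bb unfolding bounded_below_def by blast
      obtain x where x: "x \<in> E" "a = {x}" using a(1) at by auto
      have lt: "strict R x d" if "d \<in> S''" for d
        using a(2) x(2) XS that atom_lt_single by auto
      have "x \<in> cl E S''" using a(3) x(2) join_cl[OF g S''E nc''] XS by auto
      hence xc: "(fst x, snd x) \<in> conn S''" unfolding cl_def by simp
      have xS: "x \<notin> S''" using lt unfolding strict_def by blast
      obtain C where C: "C \<in> cycle_edge_sets E" "x \<in> C" "C \<subseteq> S'' \<union> {x}"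
        using path_cycle[OF g S''E x(1) xS xc] by blast
      have CE: "C \<subseteq> E" using C(1) unfolding cycle_edge_sets_def by simp
      have "\<forall>d\<in>C. (x,d) \<in> R"
      proof
        fix d assume "d \<in> C"
        then consider "d = x" | "d \<in> S''" using C(3) by blast
        then show "(x,d) \<in> R"
        proof cases
          case 1 then show ?thesis using refl x(1) unfolding refl_on_def by simp
        next
          case 2 then show ?thesis using lt unfolding strict_def by simp
        qed
      qed
      hence "smallest_edge R C = x" using smallest_char[OF lo CE C(2)] by simp
      hence "C - {x} \<in> broken_circuits E R" using C(1) unfolding broken_circuits_def by force
      moreover have "C - {x} \<subseteq> S" using C(3) S''S by blast
      ultimately show False using nbc by blast
    qed
    then show "T \<in> {T. T \<subseteq> atoms (NC n E) \<and> card T = k \<and> NBB (NC n E) (atom_lt R) T}"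
      using Tat Tk by blast
  qed
qed

end
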